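(* Let $G_1,G_2$ be finite groups written additively, $H$ a subgroup of $G_1$, and $k\ge 2$. If there exist a $(G_1,H,k,1)$-BRDF and a $(G_2,k,1)$-HDM, then there exists a $(G_1\times G_2,H\times G_2,k,1)$-BRDF.
   Context: For a finite additive group $G$ with subgroup $H$, a $(G,H,k,\lambda)$-RDF is a collection of $k$-subsets of $G$ (base blocks) whose differences $x-y$ ($x\neq y$ in a common base block) cover every element of $G\setminus H$ exactly $\lambda$ times and no element of $H$. A $(G,H,k,\lambda)$-BRDF is such an RDF in which all base blocks are disjoint from $H$ and the base blocks together with their negatives $-B=\{-b:b\in B\}$ are pairwise disjoint. For a group $G$ of order $g$, a $(G,k,1)$ difference matrix is a $k\times g$ matrix with entries in $G$ such that, for any two distinct rows, the entrywise difference is a permutation of $G$; it is homogeneous (an HDM) if moreover every row is a permutation of $G$. *)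

theory Defs
  imports Main "HOL-Library.Product_Plus"
begin

text \<open>Finite groups written additively are modelled as types of class
  finite and ab_group_add; the group G is the whole type (UNIV).\<close>

definition additive_subgroup :: "'a::ab_group_add set \<Rightarrow> bool" where
  "additive_subgroup H \<longleftrightarrow> 0 \<in> H \<and> (\<forall>x\<in>H. \<forall>y\<in>H. x + y \<in> H) \<and> (\<forall>x\<in>H. - x \<in> H)"

definition diff_count :: "'a::ab_group_add set list \<Rightarrow> 'a \<Rightarrow> nat" where
  "diff_count F g = (\<Sum>B\<leftarrow>F. card {(x, y). x \<in> B \<and> y \<in> B \<and> x \<noteq> y \<and> x - y = g})"

definition is_rdf :: "'a::{finite,ab_group_add} set \<Rightarrow> nat \<Rightarrow> nat \<Rightarrow> 'a set list \<Rightarrow> bool" where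
  "is_rdf H k lam F \<longleftrightarrow>
     (\<forall>B\<in>set F. card B = k) \<and>
     (\<forall>g. g \<notin> H \<longrightarrow> diff_count F g = lam) \<and>
     (\<forall>g. g \<in> H \<longrightarrow> diff_count F g = 0)"

definition is_brdf :: "'a::{finite,ab_group_add} set \<Rightarrow> nat \<Rightarrow> nat \<Rightarrow> 'a set list \<Rightarrow> bool" where
  "is_brdf H k lam F \<longleftrightarrow>
     is_rdf H k lam F \<and>
     (\<forall>B\<in>set F. B \<inter> H = {}) \<and>
     (\<forall>i<length F. F ! i \<inter> uminus ` (F ! i) = {}) \<and>
     (\<forall>i<length F. \<forall>j<length F. i \<noteq> j \<longrightarrow>
         F ! i \<inter> F ! j = {} \<and> F ! i \<inter> uminus ` (F ! j) = {})"

text \<open>(G,k,1) difference matrix: k x g matrix, rows indexed by i < k,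
  columns by c < g = CARD('a).  Homogeneous: every row is a permutation of G.\<close>

definition is_dm :: "nat \<Rightarrow> (nat \<Rightarrow> nat \<Rightarrow> 'a::{finite,ab_group_add}) \<Rightarrow> bool" where
  "is_dm k M \<longleftrightarrow>
     (\<forall>i<k. \<forall>j<k. i \<noteq> j \<longrightarrow>
        bij_betw (\<lambda>c. M i c - M j c) {..<card (UNIV :: 'a set)} (UNIV :: 'a set))"

definition is_hdm :: "nat \<Rightarrow> (nat \<Rightarrow> nat \<Rightarrow> 'a::{finite,ab_group_add}) \<Rightarrow> bool" where
  "is_hdm k M \<longleftrightarrow> is_dm k M \<and>
     (\<forall>i<k. bij_betw (M i) {..<card (UNIV :: 'a set)} (UNIV :: 'a set))"

end

theory Submission
  imports Defs
begin

lemma sum_div_mod: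
  fixes f :: "nat \<Rightarrow> nat \<Rightarrow> nat"
  assumes "0 < n"
  shows "(\<Sum>t<L*n. f (t div n) (t mod n)) = (\<Sum>b<L. \<Sum>c<n. f b c)"
proof (induction L)
  case 0 then show ?case by simp
next
  case (Suc L)
  have "(\<Sum>t<Suc L*n. f (t div n) (t mod n)) = (\<Sum>t<L*n. f (t div n) (t mod n)) + (\<Sum>t\<in>{L*n..<L*n+n}. f (t div n) (t mod n))"
    by (simp add: lessThan_atLeast0 add.commute sum.atLeastLessThan_concat)
  also have "(\<Sum>t\<in>{L*n..<L*n+n}. f (t div n) (t mod n)) = (\<Sum>c<n. f L c)"
  proof -
    have "(\<Sum>t\<in>{L*n..<L*n+n}. f (t div n) (t mod n)) = (\<Sum>c\<in>{0..<n}. f ((c + L*n) div n) ((c + L*n) mod n))"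
      using sum.shift_bounds_nat_ivl[of "\<lambda>t. f (t div n) (t mod n)" 0 "L*n" n] by (simp add: add.commute)
    also have "\<dots> = (\<Sum>c<n. f L c)" using assms by (intro sum.cong) auto
    finally show ?thesis .
  qed
  finally show ?case using Suc by simp
qed

definition cnt :: "'a::ab_group_add set \<Rightarrow> 'a \<Rightarrow> nat" where
  "cnt B g = card {(x, y). x \<in> B \<and> y \<in> B \<and> x \<noteq> y \<and> x - y = g}"

lemma diff_count_cnt: "diff_count F g = (\<Sum>i<length F. cnt (F ! i) g)"
  unfolding diff_count_def cnt_def by (simp add: sum_list_sum_nth atLeast0LessThan)

lemma card_pairs_enum:
  assumes e: "bij_betw e {..<k} B"
  shows "cnt B g = card {(i,j). i<k \<and> j<k \<and> i\<noteq>j \<and> e i - e j = g}"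
proof -
  let ?Q = "{(i,j). i<k \<and> j<k \<and> i\<noteq>j \<and> e i - e j = g}"
  let ?S = "{(x, y). x \<in> B \<and> y \<in> B \<and> x \<noteq> y \<and> x - y = g}"
  let ?h = "\<lambda>p. (e (fst p), e (snd p))"
  have inj: "inj_on e {..<k}" using e bij_betw_imp_inj_on by blast
  have im: "e ` {..<k} = B" using e bij_betw_imp_surj_on by blast
  have i1: "inj_on ?h ?Q"
  proof (rule inj_onI)
    fix p q assume p: "p \<in> ?Q" and q: "q \<in> ?Q" and h: "?h p = ?h q"
    have "e (fst p) = e (fst q)" "e (snd p) = e (snd q)" using h by simp_all
    moreover have "fst p \<in> {..<k}" "snd p \<in> {..<k}" "fst q \<in> {..<k}" "snd q \<in> {..<k}"
      using p q by auto
    ultimately have "fst p = fst q" "snd p = snd q" using inj_onD[OF inj] by blast+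
    then show "p = q" by (simp add: prod_eq_iff)
  qed
  have i2: "?h ` ?Q = ?S"
  proof (intro subset_antisym subsetI)
    fix p assume "p \<in> ?h ` ?Q"
    then obtain q where q: "q \<in> ?Q" "p = ?h q" by (rule imageE)
    obtain i j where "q = (i,j)" by (cases q)
    with q have ij: "i<k" "j<k" "i\<noteq>j" "e i - e j = g" "p = (e i, e j)" by auto
    have "e i \<noteq> e j" using ij inj_onD[OF inj, of i j] by auto
    moreover have "e i \<in> B" "e j \<in> B" using ij im by auto
    ultimately show "p \<in> ?S" using ij by simp
  next
    fix p assume "p \<in> ?S"
    then obtain x y where p: "p = (x,y)" "x\<in>B" "y\<in>B" "x\<noteq>y" "x-y=g" by blast
    have "x \<in> e ` {..<k}" "y \<in> e ` {..<k}" using im p by simp_all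
    then obtain i j where i: "i \<in> {..<k}" "x = e i" and j: "j \<in> {..<k}" "y = e j" by (meson imageE)
    have "(i,j) \<in> ?Q" using i j p by auto
    moreover have "p = ?h (i,j)" using i j p by simp
    ultimately show "p \<in> ?h ` ?Q" by blast
  qed
  have "card ?S = card ?Q" using card_image[OF i1] i2 by simp
  then show ?thesis unfolding cnt_def .
qed

lemma count_blk:
  fixes M :: "nat \<Rightarrow> nat \<Rightarrow> 'b::{finite,ab_group_add}" and e :: "nat \<Rightarrow> 'a::ab_group_add"
  assumes e: "bij_betw e {..<k} B" and M: "is_dm k M"
  shows "(\<Sum>c<card (UNIV :: 'b set). cnt ((\<lambda>i. (e i, M i c)) ` {..<k}) (g1, g2)) = cnt B g1"
proof -
  define n where "n = card (UNIV :: 'b set)"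
  define Q where "Q = {(i,j). i<k \<and> j<k \<and> i\<noteq>j \<and> e i - e j = g1}"
  have finQ: "finite Q" unfolding Q_def by (rule finite_subset[of _ "{..<k}\<times>{..<k}"]) auto
  have inj: "inj_on e {..<k}" using e bij_betw_imp_inj_on by blast
  have step1: "cnt ((\<lambda>i. (e i, M i c)) ` {..<k}) (g1, g2) = (\<Sum>p\<in>Q. if M (fst p) c - M (snd p) c = g2 then 1 else 0)" for c
  proof -
    have seteq: "{(i,j). i<k \<and> j<k \<and> i\<noteq>j \<and> (e i, M i c) - (e j, M j c) = (g1,g2)} = {p\<in>Q. M (fst p) c - M (snd p) c = g2}"
    proof (rule set_eqI)
      fix p
      show "p \<in> {(i,j). i<k \<and> j<k \<and> i\<noteq>j \<and> (e i, M i c) - (e j, M j c) = (g1,g2)} \<longleftrightarrow> p \<in> {p\<in>Q. M (fst p) c - M (snd p) c = g2}"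
        by (cases p) (simp add: Q_def conj_ac)
    qed
    have "bij_betw (\<lambda>i. (e i, M i c)) {..<k} ((\<lambda>i. (e i, M i c)) ` {..<k})"
      using inj by (auto simp: bij_betw_def inj_on_def)
    then have "cnt ((\<lambda>i. (e i, M i c)) ` {..<k}) (g1, g2) = card {(i,j). i<k \<and> j<k \<and> i\<noteq>j \<and> (e i, M i c) - (e j, M j c) = (g1,g2)}"
      by (rule card_pairs_enum)
    also have "\<dots> = card {p\<in>Q. M (fst p) c - M (snd p) c = g2}" by (simp only: seteq)
    also have "\<dots> = (\<Sum>p\<in>{p\<in>Q. M (fst p) c - M (snd p) c = g2}. 1)" by simp
    also have "\<dots> = (\<Sum>p\<in>Q. if M (fst p) c - M (snd p) c = g2 then 1 else 0)"
      by (rule sum.inter_filter[OF finQ])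
    finally show ?thesis .
  qed
  have "(\<Sum>c<n. cnt ((\<lambda>i. (e i, M i c)) ` {..<k}) (g1, g2)) = (\<Sum>c<n. \<Sum>p\<in>Q. if M (fst p) c - M (snd p) c = g2 then 1 else 0)"
    using step1 by simp
  also have "\<dots> = (\<Sum>p\<in>Q. \<Sum>c<n. if M (fst p) c - M (snd p) c = g2 then 1 else 0)" by (rule sum.swap)
  also have "\<dots> = (\<Sum>p\<in>Q. 1)"
  proof (rule sum.cong[OF refl])
    fix p assume "p \<in> Q"
    then have "fst p < k" "snd p < k" "fst p \<noteq> snd p" unfolding Q_def by auto
    then have bij: "bij_betw (\<lambda>c. M (fst p) c - M (snd p) c) {..<n} UNIV" using M unfolding is_dm_def n_def by auto
    have "g2 \<in> (\<lambda>c. M (fst p) c - M (snd p) c) ` {..<n}" using bij unfolding bij_betw_def by simp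
    then obtain c0 where c0': "c0 \<in> {..<n}" "g2 = M (fst p) c0 - M (snd p) c0" by (rule imageE)
    then have c0: "c0 < n" "M (fst p) c0 - M (snd p) c0 = g2" by simp_all
    have "(\<Sum>c<n. if M (fst p) c - M (snd p) c = g2 then 1 else (0::nat)) = (\<Sum>c\<in>{c\<in>{..<n}. M (fst p) c - M (snd p) c = g2}. 1)"
      by (rule sum.inter_filter[symmetric]) simp
    also have "\<dots> = card {c\<in>{..<n}. M (fst p) c - M (snd p) c = g2}" by simp
    also have "{c\<in>{..<n}. M (fst p) c - M (snd p) c = g2} = {c0}"
      using c0 bij unfolding bij_betw_def inj_on_def by auto
    finally show "(\<Sum>c<n. if M (fst p) c - M (snd p) c = g2 then 1 else 0) = (1::nat)" by simp
  qed
  also have "\<dots> = card Q" by simp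
  also have "\<dots> = cnt B g1" using card_pairs_enum[OF e] Q_def by simp
  finally show ?thesis unfolding n_def .
qed


theorem mainTheorem14:
  fixes H :: "'a::{finite,ab_group_add} set" and k :: nat
  assumes "additive_subgroup H"
    and "k \<ge> 2"
    and "\<exists>F. is_brdf H k 1 F"
    and "\<exists>M :: nat \<Rightarrow> nat \<Rightarrow> 'b::{finite,ab_group_add}. is_hdm k M"
  shows "\<exists>F. is_brdf (H \<times> (UNIV :: 'b set)) k 1 F"
proof -
  obtain F where F: "is_brdf H k 1 F" using assms(3) by blast
  obtain M :: "nat \<Rightarrow> nat \<Rightarrow> 'b" where M: "is_hdm k M" using assms(4) by blast
  have Mdm: "is_dm k M" and Mrow: "\<And>i. i<k \<Longrightarrow> bij_betw (M i) {..<card (UNIV :: 'b set)} UNIV"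
    using M unfolding is_hdm_def by auto
  define n where "n = card (UNIV :: 'b set)"
  have npos: "0 < n" unfolding n_def by (simp add: card_gt_0_iff)
  note Fu = F[unfolded is_brdf_def]
  have Frdf: "is_rdf H k 1 F" using conjunct1[OF Fu] .
  have cardF: "\<And>B. B \<in> set F \<Longrightarrow> card B = k" using conjunct1[OF Frdf[unfolded is_rdf_def]] by blast
  have FH: "\<And>B. B \<in> set F \<Longrightarrow> B \<inter> H = {}" using conjunct1[OF conjunct2[OF Fu]] by blast
  have Fself: "\<And>i. i < length F \<Longrightarrow> F ! i \<inter> uminus ` (F ! i) = {}"
    using conjunct1[OF conjunct2[OF conjunct2[OF Fu]]] by blast
  have Fpair: "\<And>i j. i < length F \<Longrightarrow> j < length F \<Longrightarrow> i \<noteq> j \<Longrightarrow>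
         F ! i \<inter> F ! j = {} \<and> F ! i \<inter> uminus ` (F ! j) = {}"
    using conjunct2[OF conjunct2[OF conjunct2[OF Fu]]] by blast
  define E where "E B = (SOME e. bij_betw e {..<k} B)" for B :: "'a set"
  have E: "bij_betw (E B) {..<k} B" if "B \<in> set F" for B
  proof -
    have "\<exists>e. bij_betw e {..<k} B"
      using ex_bij_betw_nat_finite[of B] cardF[OF that] by (simp add: atLeast0LessThan)
    then show ?thesis unfolding E_def by (rule someI_ex)
  qed
  define blk where "blk B c = (\<lambda>i. (E B i, M i c)) ` {..<k}" for B c
  define F' where "F' = map (\<lambda>t. blk (F ! (t div n)) (t mod n)) [0..<length F * n]"
  have lenF': "length F' = length F * n" unfolding F'_def by simp
  have nthF': "F' ! t = blk (F ! (t div n)) (t mod n)" if "t < length F * n" for t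
    using that unfolding F'_def by simp
  have divlt: "t div n < length F" if "t < length F * n" for t
    using that by (simp add: less_mult_imp_div_less)
  have modlt: "t mod n < n" for t using npos by simp
  have fst_blk: "fst p \<in> B" if "p \<in> blk B c" "B \<in> set F" for p B c
    using that E[OF that(2)] unfolding blk_def bij_betw_def by auto
  have card_blk: "card (blk B c) = k" if "B \<in> set F" for B c
  proof -
    have "inj_on (\<lambda>i. (E B i, M i c)) {..<k}"
      using E[OF that] unfolding bij_betw_def inj_on_def by auto
    then show ?thesis unfolding blk_def by (simp add: card_image)
  qed
  have same_blk: "c = c'" if a1: "p \<in> blk B c" and a2: "p \<in> blk B c'" and a3: "B \<in> set F"
    and a4: "c < n" and a5: "c' < n" for p B c c'
  proof -
    obtain i where i: "i < k" "p = (E B i, M i c)" using a1 unfolding blk_def by blast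
    obtain j where j: "j < k" "p = (E B j, M j c')" using a2 unfolding blk_def by blast
    have injE: "inj_on (E B) {..<k}" using E[OF a3] by (rule bij_betw_imp_inj_on)
    have "E B i = E B j" using i j by simp
    then have "i = j" using injE i(1) j(1) by (simp add: inj_on_eq_iff)
    then have "M i c = M i c'" using i j by simp
    moreover have "inj_on (M i) {..<n}" using Mrow[OF i(1)] unfolding n_def by (rule bij_betw_imp_inj_on)
    ultimately show ?thesis using a4 a5 by (simp add: inj_on_eq_iff)
  qed
  have Fset: "F ! b \<in> set F" if "b < length F" for b using that by simp
  have dc: "diff_count F' g = diff_count F (fst g)" for g
  proof -
    obtain g1 g2 where g: "g = (g1, g2)" by (cases g)
    have "diff_count F' g = (\<Sum>t<length F * n. cnt (blk (F ! (t div n)) (t mod n)) g)"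
      unfolding diff_count_cnt lenF' by (rule sum.cong) (auto simp: nthF')
    also have "\<dots> = (\<Sum>b<length F. \<Sum>c<n. cnt (blk (F ! b) c) g)"
      by (rule sum_div_mod[OF npos])
    also have "\<dots> = (\<Sum>b<length F. cnt (F ! b) g1)"
      unfolding g blk_def n_def by (intro sum.cong refl count_blk[OF E Mdm]) simp
    also have "\<dots> = diff_count F (fst g)" unfolding diff_count_cnt g by simp
    finally show ?thesis .
  qed
  have "is_brdf (H \<times> (UNIV :: 'b set)) k 1 F'"
    unfolding is_brdf_def is_rdf_def
  proof (intro conjI allI impI ballI)
    fix B' assume "B' \<in> set F'"
    then obtain t where t: "t < length F * n" "B' = F' ! t" by (auto simp: in_set_conv_nth lenF')
    then show "card B' = k" using card_blk nthF' divlt Fset by simp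
    show "B' \<inter> H \<times> UNIV = {}"
    proof (rule ccontr)
      assume "B' \<inter> H \<times> UNIV \<noteq> {}"
      then obtain p where "p \<in> B'" "fst p \<in> H" by auto
      then show False using t nthF' divlt Fset fst_blk FH by (metis disjoint_iff)
    qed
  next
    fix g :: "'a \<times> 'b" assume "g \<notin> H \<times> UNIV"
    then have "fst g \<notin> H" by (cases g) auto
    then show "diff_count F' g = 1" using dc Frdf unfolding is_rdf_def by auto
  next
    fix g :: "'a \<times> 'b" assume "g \<in> H \<times> UNIV"
    then have "fst g \<in> H" by (cases g) auto
    then show "diff_count F' g = 0" using dc Frdf unfolding is_rdf_def by auto
  next
    fix t assume t: "t < length F'"
    show "F' ! t \<inter> uminus ` (F' ! t) = {}"
    proof (rule ccontr)
      assume "F' ! t \<inter> uminus ` (F' ! t) \<noteq> {}"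
      then obtain p q where pq: "p \<in> F' ! t" "q \<in> F' ! t" "p = - q" by blast
      have tl: "t < length F * n" using t lenF' by simp
      have pt: "p \<in> blk (F ! (t div n)) (t mod n)" using pq tl nthF' by simp
      have qt: "q \<in> blk (F ! (t div n)) (t mod n)" using pq tl nthF' by simp
      have "fst p \<in> F ! (t div n)" using fst_blk pt Fset divlt tl by blast
      moreover have "fst q \<in> F ! (t div n)" using fst_blk qt Fset divlt tl by blast
      moreover have "fst p = - fst q" using pq by simp
      ultimately show False using Fself[OF divlt[OF tl]] by blast
    qed
  next
    fix t s assume t: "t < length F'" and s: "s < length F'" and ts: "t \<noteq> s"
    have tl: "t < length F * n" using t lenF' by simp
    have sl: "s < length F * n" using s lenF' by simp
    show "F' ! t \<inter> F' ! s = {}"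
    proof (rule ccontr)
      assume "F' ! t \<inter> F' ! s \<noteq> {}"
      then obtain p where p: "p \<in> F' ! t" "p \<in> F' ! s" by auto
      have pt: "p \<in> blk (F ! (t div n)) (t mod n)" using p tl nthF' by simp
      have ps: "p \<in> blk (F ! (s div n)) (s mod n)" using p sl nthF' by simp
      show False
      proof (cases "t div n = s div n")
        case True
        then have "t mod n = s mod n" using same_blk[OF pt] ps Fset[OF divlt[OF tl]] modlt by simp
        then show False using True ts by (metis div_mult_mod_eq)
      next
        case False
        have "fst p \<in> F ! (t div n)" "fst p \<in> F ! (s div n)"
          using fst_blk pt ps Fset divlt tl sl by blast+
        then show False using Fpair[OF divlt[OF tl] divlt[OF sl] False] by blast
      qed
    qed
    show "F' ! t \<inter> uminus ` (F' ! s) = {}"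
    proof (rule ccontr)
      assume "F' ! t \<inter> uminus ` (F' ! s) \<noteq> {}"
      then obtain p q where pq: "p \<in> F' ! t" "q \<in> F' ! s" "p = - q" by blast
      have pt: "p \<in> blk (F ! (t div n)) (t mod n)" using pq tl nthF' by simp
      have qs: "q \<in> blk (F ! (s div n)) (s mod n)" using pq sl nthF' by simp
      have a: "fst p \<in> F ! (t div n)" using fst_blk pt Fset divlt tl by blast
      have b: "fst q \<in> F ! (s div n)" using fst_blk qs Fset divlt sl by blast
      have c: "fst p = - fst q" using pq by simp
      show False
      proof (cases "t div n = s div n")
        case True
        then show False using a b c Fself[OF divlt[OF tl]] by auto
      next
        case False
        then show False using a b c Fpair[OF divlt[OF tl] divlt[OF sl] False] by auto
      qed
    qed
  qed
  then show ?thesis by blast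
qed

end
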